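(* Let $s>1$ be constant and $G\sim G_{n,p}$ with $p=\frac{\log n+\omega(n)}{n}$, $\omega(n)\to\infty$, $np=O(\log n)$. For the Birth-Death process on $G$ started from a single mutant vertex $v_0$, w.h.p. no vertex of $S_0$ is added to $N(X)$ and no vertex of $N(S_0)$ is added to $X$ during the first $\omega_0^{3/4}$ iterations.
   Context: Birth-Death process: $X\subseteq[n]$ is the mutant set (fitness $s$, others fitness 1), initially $\{v_0\}$; at each step a vertex $v$ is chosen with probability proportional to fitness and a uniformly random neighbor $u$ of $v$ takes the type of $v$. An iteration is a step in which $X$ changes. $N(A)=\{w\notin A:\exists v\in A, vw\in E(G)\}$. $\varepsilon=1/\log\log\log n$, $S_0=\{v:d(v)\le np/10\}$, $\omega_0=\frac{\varepsilon^2 np}{100\log(np)}$. W.h.p. refers to the randomness of both the graph and the process. *)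

theory Defs
  imports Complex_Main "HOL-Library.Landau_Symbols"
begin

text \<open>Graphs on vertex set {0..<n}: an edge set E is a set of 2-element sets {i,j}, i < j < n.\<close>

definition all_pairs :: "nat \<Rightarrow> nat set set" where
  "all_pairs n = {{i, j} | i j. i < j \<and> j < n}"

definition graph_prob :: "nat \<Rightarrow> real \<Rightarrow> nat set set \<Rightarrow> real" where
  "graph_prob n p E = p ^ card E * (1 - p) ^ (card (all_pairs n) - card E)"

definition nbrs :: "nat set set \<Rightarrow> nat \<Rightarrow> nat set" where
  "nbrs E v = {u. {v, u} \<in> E}"

definition deg :: "nat set set \<Rightarrow> nat \<Rightarrow> nat" where
  "deg E v = card (nbrs E v)"

definition bdry :: "nat set set \<Rightarrow> nat set \<Rightarrow> nat set" where
  "bdry E A = {w. w \<notin> A \<and> (\<exists>v\<in>A. {v, w} \<in> E)}"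

definition S0 :: "nat \<Rightarrow> real \<Rightarrow> nat set set \<Rightarrow> nat set" where
  "S0 n p E = {v. v < n \<and> real (deg E v) \<le> real n * p / 10}"

definition fit :: "real \<Rightarrow> nat set \<Rightarrow> nat \<Rightarrow> real" where
  "fit s X v = (if v \<in> X then s else 1)"

text \<open>Result of a Birth-Death step where v reproduces onto its neighbour u.\<close>
definition bd_result :: "nat set \<Rightarrow> nat \<Rightarrow> nat \<Rightarrow> nat set" where
  "bd_result X v u = (if v \<in> X then insert u X else X - {u})"

text \<open>Probability that one step of the Birth-Death process moves mutant set X to Y
  (a chosen vertex without neighbours causes no change).\<close>
definition step_prob :: "nat \<Rightarrow> real \<Rightarrow> nat set set \<Rightarrow> nat set \<Rightarrow> nat set \<Rightarrow> real" where
  "step_prob n s E X Y =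
     (\<Sum>v<n. fit s X v / (\<Sum>w<n. fit s X w) *
        (real (card {u \<in> nbrs E v. bd_result X v u = Y}) / real (deg E v)))"

definition change_prob :: "nat \<Rightarrow> real \<Rightarrow> nat set set \<Rightarrow> nat set \<Rightarrow> real" where
  "change_prob n s E X = (\<Sum>Y \<in> Pow {..<n} - {X}. step_prob n s E X Y)"

text \<open>Transition probability of the chain of iterations (steps in which X changes);
  it is 0 everywhere if X can no longer change (no further iterations).\<close>
definition jump_prob :: "nat \<Rightarrow> real \<Rightarrow> nat set set \<Rightarrow> nat set \<Rightarrow> nat set \<Rightarrow> real" where
  "jump_prob n s E X Y = (if Y = X then 0 else step_prob n s E X Y / change_prob n s E X)"

definition bad_trans :: "nat \<Rightarrow> real \<Rightarrow> nat set set \<Rightarrow> nat set \<Rightarrow> nat set \<Rightarrow> bool" where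
  "bad_trans n p E X Y =
     ((\<exists>w \<in> S0 n p E. w \<in> bdry E Y \<and> w \<notin> bdry E X) \<or>
      (\<exists>w \<in> bdry E (S0 n p E). w \<in> Y \<and> w \<notin> X))"

fun bad_within :: "nat \<Rightarrow> real \<Rightarrow> real \<Rightarrow> nat set set \<Rightarrow> nat \<Rightarrow> nat set \<Rightarrow> real" where
  "bad_within n p s E 0 X = 0"
| "bad_within n p s E (Suc k) X =
     (\<Sum>Y \<in> Pow {..<n}. jump_prob n s E X Y *
        (if bad_trans n p E X Y then 1 else bad_within n p s E k Y))"

definition omega0 :: "nat \<Rightarrow> real \<Rightarrow> real" where
  "omega0 n p = (let eps = 1 / ln (ln (ln (real n))) in
                   eps ^ 2 * (real n * p) / (100 * ln (real n * p)))"

definition failure_prob :: "nat \<Rightarrow> real \<Rightarrow> real \<Rightarrow> nat \<Rightarrow> real" where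
  "failure_prob n p s v0 =
     (\<Sum>E \<in> Pow (all_pairs n). graph_prob n p E *
        bad_within n p s E (nat \<lfloor>omega0 n p powr (3/4)\<rfloor>) {v0})"

end

theory Submission
  imports Defs "HOL-Real_Asymp.Real_Asymp"
begin


lemma step_prob_nonneg: "s > 0 \<Longrightarrow> step_prob n s E X Y \<ge> 0"
  unfolding step_prob_def fit_def
  by (intro sum_nonneg mult_nonneg_nonneg divide_nonneg_nonneg) auto

lemma change_prob_nonneg: "s > 0 \<Longrightarrow> change_prob n s E X \<ge> 0"
  unfolding change_prob_def by (intro sum_nonneg step_prob_nonneg)

lemma jump_prob_nonneg: "s > 0 \<Longrightarrow> jump_prob n s E X Y \<ge> 0"
  unfolding jump_prob_def using step_prob_nonneg change_prob_nonneg by auto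

lemma jump_sum_le1: "(\<Sum>Y\<in>Pow {..<n}. jump_prob n s E X Y) \<le> 1"
proof -
  have "(\<Sum>Y\<in>Pow {..<n}. jump_prob n s E X Y) = (\<Sum>Y\<in>Pow {..<n} - {X}. jump_prob n s E X Y)"
    by (rule sum.mono_neutral_right) (auto simp: jump_prob_def)
  also have "\<dots> = (\<Sum>Y\<in>Pow {..<n} - {X}. step_prob n s E X Y / change_prob n s E X)"
    by (rule sum.cong) (auto simp: jump_prob_def)
  also have "\<dots> = change_prob n s E X / change_prob n s E X"
    unfolding change_prob_def by (simp add: sum_divide_distrib[symmetric])
  also have "\<dots> \<le> 1" by (cases "change_prob n s E X = 0") auto
  finally show ?thesis .
qed

lemma bad_within_bounds: "s > 0 \<Longrightarrow> 0 \<le> bad_within n p s E k X \<and> bad_within n p s E k X \<le> 1"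
proof (induction k arbitrary: X)
  case 0 then show ?case by simp
next
  case (Suc k)
  have nn: "\<And>Y. 0 \<le> jump_prob n s E X Y" using jump_prob_nonneg Suc.prems by blast
  have b: "\<And>Y. 0 \<le> (if bad_trans n p E X Y then 1 else bad_within n p s E k Y) \<and>
      (if bad_trans n p E X Y then 1 else bad_within n p s E k Y) \<le> (1::real)"
    using Suc by auto
  have "bad_within n p s E (Suc k) X \<le> (\<Sum>Y\<in>Pow {..<n}. jump_prob n s E X Y * 1)"
    by simp (intro sum_mono mult_left_le, use b nn in auto)
  also have "\<dots> \<le> 1" using jump_sum_le1 by simp
  finally show ?case using nn b by (auto intro!: sum_nonneg)
qed

lemma jump_prob_nz: "jump_prob n s E X Y \<noteq> 0 \<Longrightarrow> \<exists>v u. {v, u} \<in> E \<and> Y = bd_result X v u"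
proof -
  assume "jump_prob n s E X Y \<noteq> 0"
  then have "step_prob n s E X Y \<noteq> 0" by (auto simp: jump_prob_def split: if_splits)
  then obtain v where "card {u \<in> nbrs E v. bd_result X v u = Y} \<noteq> 0"
    unfolding step_prob_def by (metis (no_types, lifting) divide_eq_0_iff mult_eq_0_iff of_nat_0 sum.neutral)
  then have "{u \<in> nbrs E v. bd_result X v u = Y} \<noteq> {}" by (metis card.empty)
  then show ?thesis by (auto simp: nbrs_def)
qed

fun walkE :: "nat set set \<Rightarrow> nat \<Rightarrow> nat list \<Rightarrow> bool" where
  "walkE E v [] = True"
| "walkE E v (x # xs) = ({v, x} \<in> E \<and> walkE E x xs)"

lemma walkE_append: "walkE E v (xs @ ys) = (walkE E v xs \<and> walkE E (last (v # xs)) ys)"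
  by (induction xs arbitrary: v) auto

definition reach :: "nat set set \<Rightarrow> nat \<Rightarrow> nat \<Rightarrow> nat set" where
  "reach E v0 j = {last (v0 # xs) | xs. walkE E v0 xs \<and> distinct (v0 # xs) \<and> length xs \<le> j}"

lemma reach_mono: "j \<le> j' \<Longrightarrow> reach E v0 j \<subseteq> reach E v0 j'"
  unfolding reach_def by fastforce

lemma reach0: "v0 \<in> reach E v0 0"
  unfolding reach_def by (rule CollectI, rule exI[of _ "[]"]) simp

lemma reach_step:
  assumes "w \<in> reach E v0 j" "{w, u} \<in> E"
  shows "u \<in> reach E v0 (Suc j)"
proof -
  obtain xs where xs: "w = last (v0 # xs)" "walkE E v0 xs" "distinct (v0 # xs)" "length xs \<le> j"
    using assms(1) unfolding reach_def by auto
  show ?thesis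
  proof (cases "u \<in> set (v0 # xs)")
    case False
    then have "walkE E v0 (xs @ [u])" using xs assms(2) by (simp add: walkE_append)
    moreover have "distinct (v0 # xs @ [u])" using False xs by auto
    ultimately show ?thesis using xs unfolding reach_def
      by (intro CollectI exI[of _ "xs @ [u]"]) auto
  next
    case True
    then obtain as bs where ab: "v0 # xs = as @ u # bs" by (meson split_list)
    show ?thesis
    proof (cases as)
      case Nil
      then have "u = v0" using ab by simp
      then show ?thesis using reach_mono[of 0 "Suc j" E v0] reach0[of v0 E] by auto
    next
      case (Cons a as')
      then have e: "xs = as' @ u # bs" "a = v0" using ab by auto
      then have "walkE E v0 (as' @ [u])" using xs(2) by (simp add: walkE_append)
      moreover have "distinct (v0 # as' @ [u])" using xs(3) e by auto
      moreover have "length (as' @ [u]) \<le> Suc j" using xs(4) e by simp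
      ultimately show ?thesis unfolding reach_def
        by (intro CollectI exI[of _ "as' @ [u]"]) auto
    qed
  qed
qed

lemma no_bad:
  assumes "X \<subseteq> reach E v0 r" "S0 n p E \<inter> reach E v0 (r + k + 1) = {}"
  shows "bad_within n p s E k X = 0"
  using assms
proof (induction k arbitrary: X r)
  case 0 then show ?case by simp
next
  case (Suc k)
  have "(jump_prob n s E X Y *
        (if bad_trans n p E X Y then 1 else bad_within n p s E k Y)) = 0" for Y
  proof (cases "jump_prob n s E X Y = 0")
    case False
    then obtain v u where vu: "{v, u} \<in> E" "Y = bd_result X v u" using jump_prob_nz by blast
    have Y: "Y \<subseteq> reach E v0 (Suc r)"
    proof (cases "v \<in> X")
      case True
      then have "u \<in> reach E v0 (Suc r)" using reach_step[OF _ vu(1)] Suc.prems(1) by blast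
      then show ?thesis using vu True Suc.prems(1) reach_mono[of r "Suc r" E v0]
        by (auto simp: bd_result_def)
    next
      case False
      then show ?thesis using vu Suc.prems(1) reach_mono[of r "Suc r" E v0]
        by (auto simp: bd_result_def)
    qed
    have sub: "reach E v0 (Suc (Suc r)) \<subseteq> reach E v0 (r + Suc k + 1)"
      by (rule reach_mono) simp
    have nb: "\<not> bad_trans n p E X Y"
    proof
      assume "bad_trans n p E X Y"
      then show False
        unfolding bad_trans_def
      proof (elim disjE bexE conjE)
        fix w assume w: "w \<in> S0 n p E" "w \<in> bdry E Y"
        then obtain y where "y \<in> Y" "{y, w} \<in> E" unfolding bdry_def by auto
        then have "w \<in> reach E v0 (Suc (Suc r))" using reach_step Y by blast
        then show False using w sub Suc.prems(2) by blast
      next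
        fix w assume w: "w \<in> bdry E (S0 n p E)" "w \<in> Y"
        then obtain z where z: "z \<in> S0 n p E" "{z, w} \<in> E" unfolding bdry_def by auto
        then have "{w, z} \<in> E" by (simp add: insert_commute)
        then have "z \<in> reach E v0 (Suc (Suc r))" using reach_step Y w(2) by blast
        then show False using z sub Suc.prems(2) by blast
      qed
    qed
    have "bad_within n p s E k Y = 0"
      by (rule Suc.IH[OF Y]) (use Suc.prems(2) in simp)
    then show ?thesis using nb by simp
  qed simp
  then show ?case by (simp only: bad_within.simps, intro sum.neutral ballI) simp
qed




lemma prod_lemma:
  fixes p :: real and h :: "'a \<Rightarrow> bool \<Rightarrow> real"
  assumes "finite U"
  shows "(\<Sum>E\<in>Pow U. p ^ card E * (1 - p) ^ card (U - E) * (\<Prod>e\<in>U. h e (e \<in> E)))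
        = (\<Prod>e\<in>U. p * h e True + (1 - p) * h e False)"
  using assms
proof (induction U rule: finite_induct)
  case empty then show ?case by simp
next
  case (insert a U)
  let ?f = "\<lambda>E. p ^ card E * (1 - p) ^ card (insert a U - E) * (\<Prod>e\<in>insert a U. h e (e \<in> E))"
  let ?g = "\<lambda>E. p ^ card E * (1 - p) ^ card (U - E) * (\<Prod>e\<in>U. h e (e \<in> E))"
  have inj: "inj_on (insert a) (Pow U)" using insert(2) unfolding inj_on_def
    by (metis PowD insert_ident subset_iff)
  have fin: "finite (Pow U)" "finite (insert a ` Pow U)" using insert(1) by auto
  have disj: "Pow U \<inter> insert a ` Pow U = {}" using insert(2) by auto
  have e1: "?f E = (1 - p) * h a False * ?g E" if "E \<in> Pow U" for E
  proof -
    have "a \<notin> E" using that insert(2) by auto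
    have "insert a U - E = insert a (U - E)" using \<open>a \<notin> E\<close> by auto
    moreover have "finite (U - E)" using insert(1) by simp
    moreover have "a \<notin> U - E" using insert(2) by simp
    ultimately have c: "card (insert a U - E) = Suc (card (U - E))" by simp
    show ?thesis using \<open>a \<notin> E\<close> insert(1,2) by (simp add: c prod.insert)
  qed
  have e2: "?f (insert a E) = p * h a True * ?g E" if "E \<in> Pow U" for E
  proof -
    have "a \<notin> E" using that insert(2) by auto
    have fE: "finite E" using that insert(1) finite_subset by auto
    have "insert a U - insert a E = U - E" using insert(2) by auto
    moreover have "(\<Prod>e\<in>U. h e (e \<in> insert a E)) = (\<Prod>e\<in>U. h e (e \<in> E))"
      using insert(2) by (intro prod.cong refl, rename_tac x, subgoal_tac "x \<noteq> a", simp, blast)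
    ultimately show ?thesis using \<open>a \<notin> E\<close> fE insert(1,2) by (simp add: prod.insert)
  qed
  have "(\<Sum>E\<in>Pow (insert a U). ?f E) = (\<Sum>E\<in>Pow U. ?f E) + (\<Sum>E\<in>insert a ` Pow U. ?f E)"
    unfolding Pow_insert by (rule sum.union_disjoint[OF fin disj])
  also have "(\<Sum>E\<in>insert a ` Pow U. ?f E) = (\<Sum>E\<in>Pow U. ?f (insert a E))"
    by (rule sum.reindex[OF inj, unfolded comp_def])
  also have "(\<Sum>E\<in>Pow U. ?f E) = (1 - p) * h a False * (\<Sum>E\<in>Pow U. ?g E)"
    by (subst sum_distrib_left, rule sum.cong[OF refl], rule e1)
  also have "(\<Sum>E\<in>Pow U. ?f (insert a E)) = p * h a True * (\<Sum>E\<in>Pow U. ?g E)"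
    by (subst sum_distrib_left, rule sum.cong[OF refl], rule e2)
  finally show ?case using insert by (simp add: prod.insert algebra_simps)
qed




fun pedges :: "nat \<Rightarrow> nat list \<Rightarrow> nat set set" where
  "pedges v [] = {}"
| "pedges v (x # xs) = insert {v, x} (pedges x xs)"

lemma walkE_pedges: "walkE E v xs = (pedges v xs \<subseteq> E)"
  by (induction xs arbitrary: v) auto

lemma pedges_sub: "e \<in> pedges v xs \<Longrightarrow> e \<subseteq> set (v # xs)"
  by (induction xs arbitrary: v) auto

lemma finite_pedges: "finite (pedges v xs)"
  by (induction xs arbitrary: v) auto

lemma card_pedges: "distinct (v # xs) \<Longrightarrow> card (pedges v xs) = length xs"
proof (induction xs arbitrary: v)
  case Nil then show ?case by simp
next
  case (Cons x xs)
  have "{v, x} \<notin> pedges x xs"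
    using pedges_sub[of "{v,x}" x xs] Cons.prems by auto
  then show ?case using Cons by (simp add: finite_pedges)
qed

lemma all_pairs_mem: "a \<noteq> b \<Longrightarrow> a < n \<Longrightarrow> b < n \<Longrightarrow> {a, b} \<in> all_pairs n"
  unfolding all_pairs_def
  by (cases "a < b") (auto, metis insert_commute linorder_neqE_nat)

lemma all_pairs_sub: "all_pairs n \<subseteq> Pow {..<n}"
  unfolding all_pairs_def by auto

lemma finite_all_pairs: "finite (all_pairs n)"
  by (rule finite_subset[OF all_pairs_sub]) simp

lemma all_pairs_lt: "{a, b} \<in> all_pairs n \<Longrightarrow> b < n"
  using all_pairs_sub by blast

lemma pedges_all_pairs:
  "distinct (v # xs) \<Longrightarrow> set (v # xs) \<subseteq> {..<n} \<Longrightarrow> pedges v xs \<subseteq> all_pairs n"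
  by (induction xs arbitrary: v) (auto intro!: all_pairs_mem)

lemma walkE_lt: "walkE E v xs \<Longrightarrow> E \<subseteq> all_pairs n \<Longrightarrow> set xs \<subseteq> {..<n}"
  by (induction xs arbitrary: v) (auto dest: all_pairs_lt)

lemma path_bound:
  fixes p m :: real
  assumes p: "0 \<le> p" "p \<le> 1" and d: "distinct (v0 # xs)" and sn: "set (v0 # xs) \<subseteq> {..<n}"
  shows "(\<Sum>E\<in>Pow (all_pairs n). graph_prob n p E *
            (if walkE E v0 xs \<and> real (deg E (last (v0 # xs))) \<le> m then 1 else 0))
         \<le> 10 powr m * p ^ length xs * (1 - 9 * p / 10) ^ (n - Suc (length xs))"
proof -
  define U where "U = all_pairs n"
  define P where "P = pedges v0 xs"
  define w where "w = last (v0 # xs)"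
  define D where "D = (\<lambda>u. {w, u}) ` ({..<n} - set (v0 # xs))"
  define h :: "nat set \<Rightarrow> bool \<Rightarrow> real" where
    "h e b = (if e \<in> P then (if b then 1 else 0) else if e \<in> D then (if b then 1/10 else 1) else 1)" for e b
  have finU: "finite U" unfolding U_def by (rule finite_all_pairs)
  have wset: "w \<in> set (v0 # xs)" unfolding w_def by simp
  have PU: "P \<subseteq> U" unfolding P_def U_def using d sn by (rule pedges_all_pairs)
  have DU: "D \<subseteq> U" unfolding D_def U_def using wset sn by (auto intro!: all_pairs_mem)
  have PD: "P \<inter> D = {}" unfolding D_def P_def using pedges_sub by fastforce
  have cardP: "card P = length xs" unfolding P_def using d by (rule card_pedges)
  have injD: "inj_on (\<lambda>u. {w, u}) ({..<n} - set (v0 # xs))"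
    by (auto simp: inj_on_def doubleton_eq_iff)
  have cardD: "card D = n - Suc (length xs)"
  proof -
    have "card ({..<n} - set (v0 # xs)) = n - card (set (v0 # xs))"
      using sn by (simp add: card_Diff_subset)
    also have "card (set (v0 # xs)) = Suc (length xs)" using d distinct_card by fastforce
    finally show ?thesis unfolding D_def using card_image[OF injD] by simp
  qed
  have finD: "finite D" using DU finU finite_subset by blast
  have hnn: "h e b \<ge> 0" for e b unfolding h_def by auto
  have kprod: "(\<Prod>e\<in>U. p * h e True + (1 - p) * h e False) = p ^ length xs * (1 - 9 * p / 10) ^ (n - Suc (length xs))"
  proof -
    have "(\<Prod>e\<in>U. p * h e True + (1 - p) * h e False)
        = (\<Prod>e\<in>U. if e \<in> P then p else if e \<in> D then 1 - 9 * p / 10 else 1)"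
      by (rule prod.cong) (auto simp: h_def)
    also have "\<dots> = (\<Prod>e\<in>P. p) * (\<Prod>e\<in>D. 1 - 9 * p / 10)"
    proof -
      have a: "U \<inter> P = P" using PU by auto
      have b: "U \<inter> - P \<inter> D = D" using DU PD by auto
      show ?thesis using finU by (simp add: prod.If_cases a b)
    qed
    also have "\<dots> = p ^ length xs * (1 - 9 * p / 10) ^ (n - Suc (length xs))"
      by (simp add: cardP cardD)
    finally show ?thesis .
  qed
  have ind: "(if walkE E v0 xs \<and> real (deg E w) \<le> m then 1 else 0) \<le> 10 powr m * (\<Prod>e\<in>U. h e (e \<in> E))"
    if E: "E \<subseteq> U" for E
  proof (cases "walkE E v0 xs \<and> real (deg E w) \<le> m")
    case False
    have pn: "0 \<le> (\<Prod>e\<in>U. h e (e \<in> E))" using hnn by (simp add: prod_nonneg)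
    show ?thesis by (subst if_not_P[OF False]) (simp add: pn)
  next
    case True
    then have PE: "P \<subseteq> E" unfolding P_def by (simp add: walkE_pedges)
    have "(\<Prod>e\<in>U. h e (e \<in> E)) = (\<Prod>e\<in>D. if e \<in> E then 1/10 else 1)"
    proof -
      have "(\<Prod>e\<in>U. h e (e \<in> E)) = (\<Prod>e\<in>U. if e \<in> D then (if e \<in> E then 1/10 else 1) else 1)"
        using PE PD by (intro prod.cong refl) (auto simp: h_def)
      also have "\<dots> = (\<Prod>e\<in>D. if e \<in> E then 1/10 else 1)"
      proof -
        have a: "U \<inter> D = D" using DU by auto
        show ?thesis using finU by (simp add: prod.If_cases a)
      qed
      finally show ?thesis .
    qed
    also have "\<dots> = (1/10) ^ card (D \<inter> E)"
    proof -
      show ?thesis using finD by (simp add: prod.If_cases)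
    qed
    finally have pe: "(\<Prod>e\<in>U. h e (e \<in> E)) = (1/10) ^ card (D \<inter> E)" .
    have fin_nb: "finite (nbrs E w)"
    proof (rule finite_subset)
      show "nbrs E w \<subseteq> {..<n}" using E unfolding nbrs_def U_def using all_pairs_lt by blast
    qed simp
    have "D \<inter> E \<subseteq> (\<lambda>u. {w, u}) ` nbrs E w" unfolding D_def nbrs_def by auto
    then have "card (D \<inter> E) \<le> card ((\<lambda>u. {w, u}) ` nbrs E w)"
      using fin_nb by (intro card_mono) auto
    also have "\<dots> \<le> deg E w" unfolding deg_def by (rule card_image_le[OF fin_nb])
    finally have c: "real (card (D \<inter> E)) \<le> m" using True by linarith
    have "10 powr real (card (D \<inter> E)) \<le> 10 powr m" using c by (intro powr_mono) auto
    then have "(10::real) ^ card (D \<inter> E) \<le> 10 powr m" by (simp add: powr_realpow)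
    then have "1 \<le> 10 powr m * (1/10) ^ card (D \<inter> E)"
      by (simp add: power_one_over field_simps)
    then show ?thesis using True pe by simp
  qed
  have gp: "graph_prob n p E = p ^ card E * (1 - p) ^ card (U - E)" if "E \<subseteq> U" for E
    using that finU unfolding graph_prob_def U_def
    by (simp add: card_Diff_subset finite_subset)
  have "(\<Sum>E\<in>Pow U. graph_prob n p E * (if walkE E v0 xs \<and> real (deg E w) \<le> m then 1 else 0))
      \<le> (\<Sum>E\<in>Pow U. graph_prob n p E * (10 powr m * (\<Prod>e\<in>U. h e (e \<in> E))))"
  proof (rule sum_mono, rule mult_left_mono)
    fix E assume "E \<in> Pow U"
    then show "0 \<le> graph_prob n p E" using p by (simp add: graph_prob_def)
  qed (use ind in auto)
  also have "\<dots> = 10 powr m * (\<Sum>E\<in>Pow U. p ^ card E * (1 - p) ^ card (U - E) * (\<Prod>e\<in>U. h e (e \<in> E)))"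
    by (subst sum_distrib_left, rule sum.cong) (auto simp: gp)
  also have "\<dots> = 10 powr m * (p ^ length xs * (1 - 9 * p / 10) ^ (n - Suc (length xs)))"
    by (simp add: prod_lemma[OF finU] kprod)
  finally show ?thesis unfolding U_def w_def by simp
qed




lemma failure_bound:
  fixes p s :: real
  assumes s: "s > 0" and p: "0 \<le> p" "p \<le> 1" and v0: "v0 < n"
  shows "(\<Sum>E\<in>Pow (all_pairs n). graph_prob n p E * bad_within n p s E K {v0})
     \<le> (\<Sum>l\<le>Suc K. real n ^ l * (10 powr (real n * p / 10) * p ^ l * (1 - 9 * p / 10) ^ (n - Suc l)))"
proof -
  define U where "U = all_pairs n"
  define m where "m = real n * p / 10"
  define LL where "LL l = {xs. set xs \<subseteq> {..<n} \<and> length xs = l}" for l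
  define g where "g E xs = (if walkE E v0 xs \<and> distinct (v0 # xs) \<and> real (deg E (last (v0 # xs))) \<le> m then 1 else (0::real))" for E xs
  have finLL: "finite (LL l)" for l unfolding LL_def by (rule finite_lists_length_eq) simp
  have cardLL: "card (LL l) = n ^ l" for l unfolding LL_def by (simp add: card_lists_length_eq)
  have gp_nn: "0 \<le> graph_prob n p E" for E using p by (simp add: graph_prob_def)
  have g_nn: "0 \<le> g E xs" for E xs by (simp add: g_def)
  have step1: "bad_within n p s E K {v0} \<le> (\<Sum>l\<le>Suc K. \<Sum>xs\<in>LL l. g E xs)" if E: "E \<subseteq> U" for E
  proof (cases "S0 n p E \<inter> reach E v0 (0 + K + 1) = {}")
    case True
    have "bad_within n p s E K {v0} = 0"
      by (rule no_bad[OF _ True]) (simp add: reach0)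
    then show ?thesis using g_nn by (simp add: sum_nonneg)
  next
    case False
    then obtain w where w: "w \<in> S0 n p E" "w \<in> reach E v0 (Suc K)" by auto
    then obtain xs where xs: "w = last (v0 # xs)" "walkE E v0 xs" "distinct (v0 # xs)" "length xs \<le> Suc K"
      unfolding reach_def by auto
    have "set xs \<subseteq> {..<n}" using walkE_lt[OF xs(2)] E unfolding U_def by blast
    then have inLL: "xs \<in> LL (length xs)" unfolding LL_def by simp
    have "g E xs = 1" using xs w(1) unfolding g_def S0_def m_def by auto
    have "bad_within n p s E K {v0} \<le> 1" using bad_within_bounds[OF s] by blast
    also have "1 \<le> (\<Sum>xs\<in>LL (length xs). g E xs)"
      using member_le_sum[of xs "LL (length xs)" "g E", OF inLL] g_nn finLL \<open>g E xs = 1\<close> by simp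
    also have "\<dots> \<le> (\<Sum>l\<le>Suc K. \<Sum>xs\<in>LL l. g E xs)"
      using member_le_sum[of "length xs" "{..Suc K}" "\<lambda>l. \<Sum>xs\<in>LL l. g E xs"] xs(4) g_nn
      by (simp add: sum_nonneg)
    finally show ?thesis .
  qed
  have step2: "(\<Sum>E\<in>Pow U. graph_prob n p E * g E xs) \<le> 10 powr m * p ^ l * (1 - 9 * p / 10) ^ (n - Suc l)"
    if "xs \<in> LL l" for xs l
  proof (cases "distinct (v0 # xs)")
    case True
    have sn: "set (v0 # xs) \<subseteq> {..<n}" using that v0 unfolding LL_def by auto
    have "(\<Sum>E\<in>Pow U. graph_prob n p E * g E xs) = (\<Sum>E\<in>Pow (all_pairs n). graph_prob n p E *
            (if walkE E v0 xs \<and> real (deg E (last (v0 # xs))) \<le> m then 1 else 0))"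
      unfolding U_def g_def using True by simp
    also have "\<dots> \<le> 10 powr m * p ^ length xs * (1 - 9 * p / 10) ^ (n - Suc (length xs))"
      by (rule path_bound[OF p True sn])
    finally show ?thesis using that unfolding LL_def by simp
  next
    case False
    then have "g E xs = 0" for E by (simp only: g_def if_False simp_thms)
    then have "(\<Sum>E\<in>Pow U. graph_prob n p E * g E xs) = 0" by simp
    moreover have "0 \<le> 1 - 9 * p / 10" using p by simp
    ultimately show ?thesis using p by simp
  qed
  have "(\<Sum>E\<in>Pow U. graph_prob n p E * bad_within n p s E K {v0})
      \<le> (\<Sum>E\<in>Pow U. graph_prob n p E * (\<Sum>l\<le>Suc K. \<Sum>xs\<in>LL l. g E xs))"
    by (rule sum_mono, rule mult_left_mono) (use step1 gp_nn in auto)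
  also have "\<dots> = (\<Sum>E\<in>Pow U. \<Sum>l\<le>Suc K. \<Sum>xs\<in>LL l. graph_prob n p E * g E xs)"
    by (simp only: sum_distrib_left)
  also have "\<dots> = (\<Sum>l\<le>Suc K. \<Sum>E\<in>Pow U. \<Sum>xs\<in>LL l. graph_prob n p E * g E xs)"
    by (rule sum.swap)
  also have "\<dots> = (\<Sum>l\<le>Suc K. \<Sum>xs\<in>LL l. \<Sum>E\<in>Pow U. graph_prob n p E * g E xs)"
    by (intro sum.cong refl sum.swap)
  also have "\<dots> \<le> (\<Sum>l\<le>Suc K. \<Sum>xs\<in>LL l. 10 powr m * p ^ l * (1 - 9 * p / 10) ^ (n - Suc l))"
    by (intro sum_mono step2)
  also have "\<dots> = (\<Sum>l\<le>Suc K. real n ^ l * (10 powr m * p ^ l * (1 - 9 * p / 10) ^ (n - Suc l)))"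
    by (simp add: cardLL)
  finally show ?thesis unfolding U_def m_def .
qed




lemma ln10_le: "ln (10::real) \<le> 5"
proof -
  have "ln (10::real) = ln (2 * 5)" by simp
  also have "\<dots> = ln 2 + ln 5" using ln_mult[of "2::real" 5] by simp
  finally have "ln (10::real) = ln 2 + ln 5" .
  moreover have "ln (5::real) \<le> 4" using ln_le_minus_one[of "5::real"] by simp
  moreover have "ln (2::real) < 1" by (rule ln_2_less_1)
  ultimately show ?thesis by linarith
qed

lemma term_bound:
  fixes n K l :: nat and a p A :: real
  assumes a: "a = real n * p" and p: "0 \<le> p" "p * (real K + 2) \<le> 1"
    and ln: "ln (real n) \<le> a" and a1: "1 \<le> a" and aA: "a \<le> A" and KA: "real K \<le> A powr (3/4)"
    and l: "l \<le> Suc K"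
  shows "real n ^ l * (10 powr (a / 10) * p ^ l * (1 - 9 * p / 10) ^ (n - Suc l))
     \<le> A powr (A powr (3/4) + 2) * (3 * exp (-(2/5) * ln (real n)))"
proof -
  have A1: "1 \<le> A" using a1 aA by linarith
  have "p * 2 \<le> p * (real K + 2)" using p by (intro mult_left_mono) auto
  then have p1: "p \<le> 1/2" using p by linarith
  have "real n ^ l * p ^ l = a ^ l" by (simp add: a power_mult_distrib)
  also have "\<dots> \<le> a ^ Suc K" using a1 l by (intro power_increasing) auto
  also have "\<dots> = a powr real (Suc K)" using a1 by (subst powr_realpow) auto
  also have "\<dots> \<le> A powr real (Suc K)" using a1 aA by (intro powr_mono2) auto
  also have "\<dots> \<le> A powr (A powr (3/4) + 2)" using A1 KA by (intro powr_mono) auto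
  finally have t1: "real n ^ l * p ^ l \<le> A powr (A powr (3/4) + 2)" .
  have "(1 - 9 * p / 10) ^ (n - Suc l) \<le> exp (- 9 * p / 10) ^ (n - Suc l)"
    using p1 p exp_ge_add_one_self[of "- 9 * p / 10"] by (intro power_mono) auto
  also have "\<dots> = exp (real (n - Suc l) * (- 9 * p / 10))" by (rule exp_of_nat_mult[symmetric])
  also have "\<dots> \<le> exp ((real n - (real K + 2)) * (- 9 * p / 10))"
  proof -
    have "real n - (real K + 2) \<le> real (n - Suc l)" using l by linarith
    then show ?thesis using p by (intro exp_mono mult_right_mono_neg) auto
  qed
  also have "\<dots> \<le> exp (- 9 * a / 10 + 1)"
  proof (intro exp_mono)
    have "(real n - (real K + 2)) * (- 9 * p / 10) = - 9 * a / 10 + 9/10 * (p * (real K + 2))"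
      by (simp add: a field_simps)
    then show "(real n - (real K + 2)) * (- 9 * p / 10) \<le> - 9 * a / 10 + 1" using p by linarith
  qed
  finally have t2: "(1 - 9 * p / 10) ^ (n - Suc l) \<le> exp (- 9 * a / 10 + 1)" .
  have t3: "10 powr (a / 10) \<le> exp (a / 2)"
  proof -
    have "10 powr (a / 10) = exp (a / 10 * ln 10)" by (simp add: powr_def)
    also have "\<dots> \<le> exp (a / 2)" using ln10_le a1 by (intro exp_mono) (auto simp: field_simps)
    finally show ?thesis .
  qed
  have "real n ^ l * (10 powr (a / 10) * p ^ l * (1 - 9 * p / 10) ^ (n - Suc l))
      = (real n ^ l * p ^ l) * (10 powr (a / 10) * (1 - 9 * p / 10) ^ (n - Suc l))" by simp
  also have "\<dots> \<le> A powr (A powr (3/4) + 2) * (exp (a / 2) * exp (- 9 * a / 10 + 1))"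
    using t1 t2 t3 p1 p by (intro mult_mono) (auto simp: a)
  also have "exp (a / 2) * exp (- 9 * a / 10 + 1) \<le> 3 * exp (-(2/5) * ln (real n))"
  proof -
    have "exp (a / 2) * exp (- 9 * a / 10 + 1) = exp 1 * exp (-(2/5) * a)"
      by (simp add: exp_add[symmetric])
    also have "\<dots> \<le> 3 * exp (-(2/5) * ln (real n))"
      using ln exp_le by (intro mult_mono) auto
    finally show ?thesis .
  qed
  then have "A powr (A powr (3/4) + 2) * (exp (a / 2) * exp (- 9 * a / 10 + 1))
      \<le> A powr (A powr (3/4) + 2) * (3 * exp (-(2/5) * ln (real n)))"
    by (intro mult_left_mono) auto
  finally show ?thesis .
qed

lemma sum_bound:
  fixes n K :: nat and a p A :: real
  assumes a: "a = real n * p" and p: "0 \<le> p" "p * (real K + 2) \<le> 1"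
    and ln: "ln (real n) \<le> a" and a1: "1 \<le> a" and aA: "a \<le> A" and KA: "real K \<le> A powr (3/4)"
  shows "(\<Sum>l\<le>Suc K. real n ^ l * (10 powr (a / 10) * p ^ l * (1 - 9 * p / 10) ^ (n - Suc l)))
     \<le> (A powr (3/4) + 3) * A powr (A powr (3/4) + 2) * (3 * exp (-(2/5) * ln (real n)))"
proof -
  have "(\<Sum>l\<le>Suc K. real n ^ l * (10 powr (a / 10) * p ^ l * (1 - 9 * p / 10) ^ (n - Suc l)))
      \<le> (\<Sum>l\<le>Suc K. A powr (A powr (3/4) + 2) * (3 * exp (-(2/5) * ln (real n))))"
    by (intro sum_mono term_bound[OF assms]) auto
  also have "\<dots> = (real K + 2) * (A powr (A powr (3/4) + 2) * (3 * exp (-(2/5) * ln (real n))))"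
    by simp
  also have "\<dots> \<le> (A powr (3/4) + 3) * (A powr (A powr (3/4) + 2) * (3 * exp (-(2/5) * ln (real n))))"
    using KA by (intro mult_right_mono) auto
  finally show ?thesis by simp
qed




theorem mainTheorem9:
  fixes s :: real and \<omega> p :: "nat \<Rightarrow> real" and v0 :: "nat \<Rightarrow> nat"
  assumes "s > 1"
    and "filterlim \<omega> at_top sequentially"
    and "\<And>n. p n = (ln (real n) + \<omega> n) / real n"
    and "(\<lambda>n. real n * p n) \<in> O(\<lambda>n. ln (real n))"
    and "\<And>n. n \<ge> 1 \<Longrightarrow> v0 n < n"
  shows "(\<lambda>n. failure_prob n (p n) s (v0 n)) \<longlonglongrightarrow> 0"
proof -
  define A where "A n = ln (real n) powr (11/10)" for n :: nat
  define G where "G n = (A n powr (3/4) + 3) * A n powr (A n powr (3/4) + 2) * (3 * exp (-(2/5) * ln (real n)))" for n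
  obtain c where c: "c > 0" "eventually (\<lambda>n. norm (real n * p n) \<le> c * norm (ln (real n))) sequentially"
    using assms(4) by (elim landau_o.bigE)
  have ev1: "eventually (\<lambda>n. (1::nat) \<le> n) sequentially" by (rule eventually_ge_at_top)
  have ev2: "eventually (\<lambda>n. 0 \<le> \<omega> n) sequentially"
    using assms(2) by (simp add: filterlim_at_top)
  have ev4: "eventually (\<lambda>n. c * ln (real n) \<le> A n) sequentially"
    unfolding A_def by real_asymp
  have ev5: "eventually (\<lambda>n::nat. 3 \<le> ln (real n)) sequentially" by real_asymp
  have ev6: "eventually (\<lambda>n::nat. 1 \<le> ln (ln (ln (real n)))) sequentially" by real_asymp
  have ev7: "eventually (\<lambda>n. A n * (A n powr (3/4) + 2) / real n \<le> 1) sequentially"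
    unfolding A_def by real_asymp
  have lim: "G \<longlonglongrightarrow> 0" unfolding G_def A_def by real_asymp
  have bnd: "eventually (\<lambda>n. 0 \<le> failure_prob n (p n) s (v0 n) \<and> failure_prob n (p n) s (v0 n) \<le> G n) sequentially"
    using ev1 ev2 c(2) ev4 ev5 ev6 ev7
  proof eventually_elim
    case (elim n)
    define a where "a = real n * p n"
    define K where "K = nat \<lfloor>omega0 n (p n) powr (3/4)\<rfloor>"
    have n0: "real n > 0" using elim(1) by simp
    have s0: "s > 0" using assms(1) by simp
    have v0n: "v0 n < n" using assms(5) elim(1) by simp
    have aeq: "a = ln (real n) + \<omega> n" unfolding a_def assms(3) using n0 by simp
    have lna: "ln (real n) \<le> a" using aeq elim(2) by simp
    have a3: "3 \<le> a" using lna elim(5) by simp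
    have aA: "a \<le> A n" using elim(3,4,5) unfolding a_def by simp
    have p0: "0 \<le> p n" using elim(2,5) n0 unfolding assms(3) by simp
    have lnla: "1 \<le> ln a"
    proof -
      have "exp 1 \<le> a" using exp_le a3 by simp
      then have "ln (exp 1) \<le> ln a" using a3 by (subst ln_le_cancel_iff) auto
      then show ?thesis by simp
    qed
    define eps where "eps = 1 / ln (ln (ln (real n)))"
    have eps: "0 < eps" "eps \<le> 1" using elim(6) unfolding eps_def by auto
    have eps2: "0 \<le> eps ^ 2" "eps ^ 2 \<le> 1" using eps by (auto simp: power_le_one)
    have om: "omega0 n (p n) = eps ^ 2 * a / (100 * ln a)"
      unfolding omega0_def eps_def a_def Let_def by simp
    have om0: "0 \<le> omega0 n (p n)" using om eps2 a3 lnla by simp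
    have om1: "omega0 n (p n) \<le> a"
    proof -
      have x0: "0 \<le> eps ^ 2 * a" using eps2 a3 by simp
      have "eps ^ 2 * a * 1 \<le> eps ^ 2 * a * (100 * ln a)"
        using x0 lnla by (intro mult_left_mono) auto
      then have "eps ^ 2 * a / (100 * ln a) \<le> eps ^ 2 * a"
        using lnla by (subst pos_divide_le_eq) auto
      also have "\<dots> \<le> a" using eps2 a3 by (simp add: mult_left_le_one_le)
      finally show ?thesis using om by simp
    qed
    have KA: "real K \<le> A n powr (3/4)"
    proof -
      have "real K \<le> omega0 n (p n) powr (3/4)" unfolding K_def
        using om0 by (simp add: of_nat_nat)
      also have "\<dots> \<le> a powr (3/4)" using om0 om1 by (intro powr_mono2) auto
      also have "\<dots> \<le> A n powr (3/4)" using aA a3 by (intro powr_mono2) auto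
      finally show ?thesis .
    qed
    have pK: "p n * (real K + 2) \<le> 1"
    proof -
      have "p n \<le> A n / real n" using aA n0 unfolding a_def by (simp add: field_simps)
      then have "p n * (real K + 2) \<le> A n / real n * (A n powr (3/4) + 2)"
        using KA p0 by (intro mult_mono) auto
      then show ?thesis using elim(7) by simp
    qed
    have "p n * 2 \<le> p n * (real K + 2)" using p0 by (intro mult_left_mono) auto
    then have p1: "p n \<le> 1" using pK p0 by linarith
    have "failure_prob n (p n) s (v0 n)
        \<le> (\<Sum>l\<le>Suc K. real n ^ l * (10 powr (real n * p n / 10) * p n ^ l * (1 - 9 * p n / 10) ^ (n - Suc l)))"
      unfolding failure_prob_def K_def
      by (rule failure_bound[OF s0 p0 p1 v0n])
    also have "\<dots> \<le> G n" unfolding G_def a_def[symmetric]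
      by (rule sum_bound[OF a_def p0 pK lna _ aA KA]) (use a3 in simp)
    finally have up: "failure_prob n (p n) s (v0 n) \<le> G n" .
    have "0 \<le> failure_prob n (p n) s (v0 n)"
      unfolding failure_prob_def
      using bad_within_bounds assms(1) p0 p1
      by (intro sum_nonneg mult_nonneg_nonneg) (auto simp: graph_prob_def)
    then show ?case using up by simp
  qed
  show ?thesis
  proof (rule tendsto_sandwich[of "\<lambda>_. 0" _ _ G])
    show "eventually (\<lambda>n. 0 \<le> failure_prob n (p n) s (v0 n)) sequentially"
      using bnd by (rule eventually_mono) simp
    show "eventually (\<lambda>n. failure_prob n (p n) s (v0 n) \<le> G n) sequentially"
      using bnd by (rule eventually_mono) simp
  qed (auto simp: lim)
qed


end
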